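(* Let $n\ge1$, $V:\mathbb{R}\to\mathcal{S}_n$ bounded, $h=-\partial_{xx}^2+V$ self-adjoint on $L^2(\mathbb{R},\mathbb{C}^n)$ with domain $H^2(\mathbb{R},\mathbb{C}^n)$. For every $E\in\mathbb{R}\setminus\sigma(h)$, the sets $\ell^+(E)$ and $\ell^-(E)$ are Lagrangian planes of $\mathcal{H}_b$, and $\mathcal{H}_b=\ell^+(E)\oplus\ell^-(E)$.
   Context: $\mathcal{S}_n$ = Hermitian $n\times n$ matrices. $\mathcal{H}_b=\mathbb{C}^n\times\mathbb{C}^n$ with $\omega((z_1,z_1'),(z_2,z_2'))=\langle z_1,z_2'\rangle-\langle z_1',z_2\rangle$; $\ell^\circ=\{x:\omega(x,y)=0\ \forall y\in\ell\}$; $\ell$ Lagrangian iff $\ell=\ell^\circ$. $\ell^\pm(E):=\{(\psi(0),\psi'(0)):\psi\in H^2(\mathbb{R}^\pm,\mathbb{C}^n),\ -\psi''+V\psi=E\psi\text{ on }\mathbb{R}^\pm\}$. *)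

theory Defs
  imports "HOL-Analysis.Analysis"
begin

definition cinner :: "complex^'n \<Rightarrow> complex^'n \<Rightarrow> complex" where
  "cinner z w = (\<Sum>i\<in>UNIV. cnj (z $ i) * w $ i)"

definition omega :: "((complex^'n) \<times> (complex^'n)) \<Rightarrow> ((complex^'n) \<times> (complex^'n)) \<Rightarrow> complex" where
  "omega x y = cinner (fst x) (snd y) - cinner (snd x) (fst y)"

definition annihilator :: "((complex^'n) \<times> (complex^'n)) set \<Rightarrow> ((complex^'n) \<times> (complex^'n)) set" where
  "annihilator L = {x. \<forall>y\<in>L. omega x y = 0}"

definition lagrangian :: "((complex^'n) \<times> (complex^'n)) set \<Rightarrow> bool" where
  "lagrangian L \<longleftrightarrow> L = annihilator L"

definition hermitian_mat :: "complex^'n^'n \<Rightarrow> bool" where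
  "hermitian_mat A \<longleftrightarrow> (\<forall>i j. A $ i $ j = cnj (A $ j $ i))"

definition square_integrable :: "real set \<Rightarrow> (real \<Rightarrow> complex^'n) \<Rightarrow> bool" where
  "square_integrable S f \<longleftrightarrow> f measurable_on S \<and> (\<lambda>x. (norm (f x))\<^sup>2) integrable_on S"

text \<open>H^2(S) on an interval S, via the absolutely continuous representative:
  psi is differentiable on S (one-sided at endpoints) with derivative psi1,
  psi1 is absolutely continuous with a.e. derivative psi2 (i.e. psi1 is the
  indefinite integral of psi2), and psi, psi1, psi2 are all in L^2(S).\<close>
definition H2_repr :: "real set \<Rightarrow> (real \<Rightarrow> complex^'n) \<Rightarrow> (real \<Rightarrow> complex^'n)
                       \<Rightarrow> (real \<Rightarrow> complex^'n) \<Rightarrow> bool" where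
  "H2_repr S \<psi> \<psi>1 \<psi>2 \<longleftrightarrow>
     (\<forall>x\<in>S. (\<psi> has_vector_derivative \<psi>1 x) (at x within S)) \<and>
     (\<forall>a\<in>S. \<forall>b\<in>S. a \<le> b \<longrightarrow> (\<psi>2 has_integral (\<psi>1 b - \<psi>1 a)) {a..b}) \<and>
     square_integrable S \<psi> \<and> square_integrable S \<psi>1 \<and> square_integrable S \<psi>2"

definition ell :: "real set \<Rightarrow> (real \<Rightarrow> complex^'n^'n) \<Rightarrow> real \<Rightarrow> ((complex^'n) \<times> (complex^'n)) set" where
  "ell S V E = {(\<psi> 0, \<psi>1 0) | \<psi> \<psi>1 \<psi>2. H2_repr S \<psi> \<psi>1 \<psi>2 \<and>
       negligible {x\<in>S. \<psi>2 x \<noteq> V x *v \<psi> x - complex_of_real E *s \<psi> x}}"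

definition ell_plus where "ell_plus V E = ell {0..} V E"
definition ell_minus where "ell_minus V E = ell {..0} V E"

text \<open>Spectrum of h = -d^2/dx^2 + V with domain H^2(R): z is in the resolvent set iff
  h - z : H^2(R) \<rightarrow> L^2(R) is bijective (bounded inverse is automatic for the
  closed operator h).\<close>
definition schrodinger_spectrum :: "(real \<Rightarrow> complex^'n^'n) \<Rightarrow> complex set" where
  "schrodinger_spectrum V = {z. \<not> (
     (\<forall>f. square_integrable UNIV f \<longrightarrow>
        (\<exists>\<psi> \<psi>1 \<psi>2. H2_repr UNIV \<psi> \<psi>1 \<psi>2 \<and>
           negligible {x. - \<psi>2 x + V x *v \<psi> x - z *s \<psi> x \<noteq> f x})) \<and>
     (\<forall>\<psi> \<psi>1 \<psi>2. H2_repr UNIV \<psi> \<psi>1 \<psi>2 \<and>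
           negligible {x. - \<psi>2 x + V x *v \<psi> x - z *s \<psi> x \<noteq> 0} \<longrightarrow> (\<forall>x. \<psi> x = 0)))}"

end

theory Submission
  imports Defs
begin


lemma sigma_finite_lebesgue_real: "sigma_finite_measure (lebesgue :: real measure)"
proof
  show "\<exists>A. countable A \<and> A \<subseteq> sets (lebesgue::real measure) \<and> \<Union> A = space lebesgue \<and> (\<forall>a\<in>A. emeasure lebesgue a \<noteq> \<infinity>)"
  proof (intro exI[of _ "range (\<lambda>n::nat. {-real n..real n})"] conjI)
    show "\<Union> (range (\<lambda>n::nat. {-real n..real n})) = space lebesgue"
    proof -
      have "x \<in> \<Union> (range (\<lambda>n::nat. {-real n..real n}))" for x :: real
      proof -
        obtain n :: nat where "\<bar>x\<bar> \<le> real n" using real_arch_simple by blast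
        then have "x \<in> {-real n..real n}" by auto
        then show ?thesis by blast
      qed
      then show ?thesis by auto
    qed
  qed auto
qed

lemma pair_sf_leb: "pair_sigma_finite (lebesgue :: real measure) (lebesgue :: real measure)"
  by (intro pair_sigma_finite.intro sigma_finite_lebesgue_real)

lemma idm: "(\<lambda>x::real. x) \<in> borel_measurable lebesgue" by (simp add: measurable_completion)
lemma fstm: "(\<lambda>p::real\<times>real. fst p) \<in> borel_measurable (lebesgue \<Otimes>\<^sub>M lebesgue)" 
  by (rule measurable_compose[OF measurable_fst idm])
lemma sndm: "(\<lambda>p::real\<times>real. snd p) \<in> borel_measurable (lebesgue \<Otimes>\<^sub>M lebesgue)" 
  by (rule measurable_compose[OF measurable_snd idm])
lemma le_meas: "k \<in> borel_measurable (lebesgue \<Otimes>\<^sub>M lebesgue) \<Longrightarrow> (\<lambda>p::real\<times>real. if fst p \<le> snd p then k p else (0::complex)) \<in> borel_measurable (lebesgue \<Otimes>\<^sub>M lebesgue)"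
  by (intro measurable_If borel_measurable_le[OF fstm sndm]) auto
lemma le_meas2: "k \<in> borel_measurable (lebesgue \<Otimes>\<^sub>M lebesgue) \<Longrightarrow> (\<lambda>p::real\<times>real. if fst p \<le> snd p then 0 else k p :: complex) \<in> borel_measurable (lebesgue \<Otimes>\<^sub>M lebesgue)"
  by (intro measurable_If borel_measurable_le[OF fstm sndm]) auto

lemma ibp_ac:
  fixes u F g f :: "real \<Rightarrow> complex"
  assumes ab: "a \<le> b"
    and g: "g absolutely_integrable_on {a..b}" and f: "f absolutely_integrable_on {a..b}"
    and u: "\<And>x. x \<in> {a..b} \<Longrightarrow> (g has_integral (u x - u a)) {a..x}"
    and F: "\<And>x. x \<in> {a..b} \<Longrightarrow> (f has_integral (F x - F a)) {a..x}"
  shows "((\<lambda>x. g x * F x + u x * f x) has_integral (u b * F b - u a * F a)) {a..b}"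
proof -
  interpret P: pair_sigma_finite "lebesgue :: real measure" "lebesgue :: real measure" by (rule pair_sf_leb)
  define gi where "gi = (\<lambda>t. indicator {a..b} t *\<^sub>R g t)"
  define fi where "fi = (\<lambda>t. indicator {a..b} t *\<^sub>R f t)"
  have gi_int: "integrable lebesgue gi" using g by (simp add: set_integrable_def gi_def)
  have fi_int: "integrable lebesgue fi" using f by (simp add: set_integrable_def fi_def)
  have [measurable]: "gi \<in> borel_measurable lebesgue" by (rule borel_measurable_integrable[OF gi_int])
  have [measurable]: "fi \<in> borel_measurable lebesgue" by (rule borel_measurable_integrable[OF fi_int])
  define k where "k = (\<lambda>(t,x). gi t * fi x)"
  have k_meas[measurable]: "k \<in> borel_measurable (lebesgue \<Otimes>\<^sub>M lebesgue)" unfolding k_def by measurable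
  have k_int: "integrable (lebesgue \<Otimes>\<^sub>M lebesgue) k"
  proof (rule P.Fubini_integrable[OF k_meas])
    have "integrable lebesgue (\<lambda>t. norm (gi t) * (\<integral>x. norm (fi x) \<partial>lebesgue))"
      by (intro integrable_mult_left integrable_norm gi_int)
    then show "integrable lebesgue (\<lambda>t. \<integral>x. norm (k (t, x)) \<partial>lebesgue)"
      by (simp add: k_def norm_mult)
    show "AE t in lebesgue. integrable lebesgue (\<lambda>x. k (t, x))"
      by (simp add: k_def integrable_mult_right fi_int)
  qed
  define T1 where "T1 = (\<lambda>p::real\<times>real. if fst p \<le> snd p then k p else 0)"
  define T2 where "T2 = (\<lambda>p::real\<times>real. if fst p \<le> snd p then 0 else k p)"
  have T1_meas: "T1 \<in> borel_measurable (lebesgue \<Otimes>\<^sub>M lebesgue)" unfolding T1_def by (rule le_meas[OF k_meas])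
  have T2_meas: "T2 \<in> borel_measurable (lebesgue \<Otimes>\<^sub>M lebesgue)" unfolding T2_def by (rule le_meas2[OF k_meas])
  have T1_int: "integrable (lebesgue \<Otimes>\<^sub>M lebesgue) T1"
    by (rule Bochner_Integration.integrable_bound[OF k_int T1_meas]) (auto simp: T1_def)
  have T2_int: "integrable (lebesgue \<Otimes>\<^sub>M lebesgue) T2"
    by (rule Bochner_Integration.integrable_bound[OF k_int T2_meas]) (auto simp: T2_def)
  have kT: "k = (\<lambda>p. T1 p + T2 p)" by (auto simp: T1_def T2_def)
  have gint: "integral\<^sup>L lebesgue gi = u b - u a"
  proof -
    have "integral\<^sup>L lebesgue gi = integral {a..b} g"
      using set_lebesgue_integral_eq_integral(2)[OF g] by (simp add: set_lebesgue_integral_def gi_def)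
    also have "\<dots> = u b - u a" using u[of b] ab by (simp add: integral_unique)
    finally show ?thesis .
  qed
  have fint: "integral\<^sup>L lebesgue fi = F b - F a"
  proof -
    have "integral\<^sup>L lebesgue fi = integral {a..b} f"
      using set_lebesgue_integral_eq_integral(2)[OF f] by (simp add: set_lebesgue_integral_def fi_def)
    also have "\<dots> = F b - F a" using F[of b] ab by (simp add: integral_unique)
    finally show ?thesis .
  qed
  have I1: "integral\<^sup>L (lebesgue \<Otimes>\<^sub>M lebesgue) k = (u b - u a) * (F b - F a)"
  proof -
    have "integral\<^sup>L (lebesgue \<Otimes>\<^sub>M lebesgue) k = (\<integral>t. (\<integral>x. k (t,x) \<partial>lebesgue) \<partial>lebesgue)"
      using P.integral_fst'[OF k_int] by simp
    also have "\<dots> = (\<integral>t. gi t * integral\<^sup>L lebesgue fi \<partial>lebesgue)"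
      by (simp add: k_def)
    also have "\<dots> = integral\<^sup>L lebesgue gi * integral\<^sup>L lebesgue fi"
      by simp
    finally show ?thesis by (simp add: gint fint)
  qed
  have I2: "integral\<^sup>L (lebesgue \<Otimes>\<^sub>M lebesgue) k = integral\<^sup>L (lebesgue \<Otimes>\<^sub>M lebesgue) T1 + integral\<^sup>L (lebesgue \<Otimes>\<^sub>M lebesgue) T2"
    unfolding kT by (rule Bochner_Integration.integral_add[OF T1_int T2_int])
  have inner1: "(\<integral>t. T1 (t,x) \<partial>lebesgue) = (u x - u a) * fi x" for x
  proof (cases "x \<in> {a..b}")
    case True
    have si: "set_integrable lebesgue {a..x} g"
      by (rule set_integrable_subset[OF g]) (use True in auto)
    have "(\<lambda>t. T1 (t,x)) = (\<lambda>t. (indicator {a..x} t *\<^sub>R g t) * fi x)"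
      using True by (auto simp: T1_def k_def gi_def indicator_def)
    then have "(\<integral>t. T1 (t,x) \<partial>lebesgue) = (\<integral>t. (indicator {a..x} t *\<^sub>R g t) * fi x \<partial>lebesgue)"
      by (simp only:)
    also have "\<dots> = (\<integral>t. indicator {a..x} t *\<^sub>R g t \<partial>lebesgue) * fi x"
      by (rule integral_mult_left_zero)
    also have "(\<integral>t. indicator {a..x} t *\<^sub>R g t \<partial>lebesgue) = integral {a..x} g"
      using set_lebesgue_integral_eq_integral(2)[OF si] by (simp add: set_lebesgue_integral_def)
    also have "\<dots> = u x - u a" using u[OF True] by (simp add: integral_unique)
    finally show ?thesis .
  next
    case False
    then have "fi x = 0" by (simp add: fi_def)
    then have "\<And>t. T1 (t,x) = 0" by (simp add: T1_def k_def)
    then show ?thesis using \<open>fi x = 0\<close> by simp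
  qed
  have inner2: "(\<integral>x. T2 (t,x) \<partial>lebesgue) = gi t * (F t - F a)" for t
  proof (cases "t \<in> {a..b}")
    case True
    have si: "set_integrable lebesgue {a..<t} f"
      by (rule set_integrable_subset[OF f]) (use True in auto)
    have "(\<lambda>x. T2 (t,x)) = (\<lambda>x. gi t * (indicator {a..<t} x *\<^sub>R f x))"
      using True by (auto simp: T2_def k_def fi_def indicator_def)
    then have "(\<integral>x. T2 (t,x) \<partial>lebesgue) = (\<integral>x. gi t * (indicator {a..<t} x *\<^sub>R f x) \<partial>lebesgue)"
      by (simp only:)
    also have "\<dots> = gi t * (\<integral>x. indicator {a..<t} x *\<^sub>R f x \<partial>lebesgue)"
      by (rule integral_mult_right_zero)
    also have "(\<integral>x. indicator {a..<t} x *\<^sub>R f x \<partial>lebesgue) = integral {a..<t} f"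
      using set_lebesgue_integral_eq_integral(2)[OF si] by (simp add: set_lebesgue_integral_def)
    also have "\<dots> = integral {a..t} f"
      by (rule integral_subset_negligible) (use True in auto)
    also have "\<dots> = F t - F a" using F[OF True] by (simp add: integral_unique)
    finally show ?thesis .
  next
    case False
    then have "gi t = 0" by (simp add: gi_def)
    then have "\<And>x. T2 (t,x) = 0" by (simp add: T2_def k_def)
    then show ?thesis using \<open>gi t = 0\<close> by simp
  qed
  have cp1: "(\<lambda>(t,x). T1 (t,x)) = T1" by auto
  have cp2: "(\<lambda>(t,x). T2 (t,x)) = T2" by auto
  have I3: "integral\<^sup>L (lebesgue \<Otimes>\<^sub>M lebesgue) T1 = (\<integral>x. (u x - u a) * fi x \<partial>lebesgue)"
    and A_int: "integrable lebesgue (\<lambda>x. (u x - u a) * fi x)"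
  proof -
    have i: "integrable (lebesgue \<Otimes>\<^sub>M lebesgue) (\<lambda>(t,x). T1 (t,x))" using T1_int cp1 by simp
    show "integral\<^sup>L (lebesgue \<Otimes>\<^sub>M lebesgue) T1 = (\<integral>x. (u x - u a) * fi x \<partial>lebesgue)"
      using P.integral_snd[OF i] cp1 inner1 by simp
    show "integrable lebesgue (\<lambda>x. (u x - u a) * fi x)"
      using P.integrable_snd[OF i] inner1 by simp
  qed
  have I4: "integral\<^sup>L (lebesgue \<Otimes>\<^sub>M lebesgue) T2 = (\<integral>t. gi t * (F t - F a) \<partial>lebesgue)"
    and B_int: "integrable lebesgue (\<lambda>t. gi t * (F t - F a))"
  proof -
    have i: "integrable (lebesgue \<Otimes>\<^sub>M lebesgue) (\<lambda>(t,x). T2 (t,x))" using T2_int cp2 by simp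
    show "integral\<^sup>L (lebesgue \<Otimes>\<^sub>M lebesgue) T2 = (\<integral>t. gi t * (F t - F a) \<partial>lebesgue)"
      using P.integral_fst[OF i] cp2 inner2 by simp
    show "integrable lebesgue (\<lambda>t. gi t * (F t - F a))"
      using P.integrable_fst[OF i] inner2 by simp
  qed
  have eA: "(\<lambda>x. (u x - u a) * fi x) = (\<lambda>x. indicator {a..b} x *\<^sub>R ((u x - u a) * f x))"
    by (auto simp: fi_def indicator_def)
  have eB: "(\<lambda>t. gi t * (F t - F a)) = (\<lambda>x. indicator {a..b} x *\<^sub>R (g x * (F x - F a)))"
    by (auto simp: gi_def indicator_def)
  have sA: "set_integrable lebesgue {a..b} (\<lambda>x. (u x - u a) * f x)"
    using A_int eA by (simp add: set_integrable_def)
  have sB: "set_integrable lebesgue {a..b} (\<lambda>x. g x * (F x - F a))"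
    using B_int eB by (simp add: set_integrable_def)
  define A where "A = (\<integral>x. (u x - u a) * fi x \<partial>lebesgue)"
  define B where "B = (\<integral>t. gi t * (F t - F a) \<partial>lebesgue)"
  have hA: "((\<lambda>x. (u x - u a) * f x) has_integral A) {a..b}"
    using has_integral_set_lebesgue[OF sA] eA by (simp add: A_def set_lebesgue_integral_def)
  have hB: "((\<lambda>x. g x * (F x - F a)) has_integral B) {a..b}"
    using has_integral_set_lebesgue[OF sB] eB by (simp add: B_def set_lebesgue_integral_def)
  have AB: "A + B = (u b - u a) * (F b - F a)"
    using I1 I2 I3 I4 by (simp add: A_def B_def)
  have hg: "((\<lambda>x. F a * g x) has_integral F a * (u b - u a)) {a..b}"
    using has_integral_mult_right[OF u[of b]] ab by simp
  have hf: "((\<lambda>x. u a * f x) has_integral u a * (F b - F a)) {a..b}"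
    using has_integral_mult_right[OF F[of b]] ab by simp
  have "((\<lambda>x. g x * (F x - F a) + F a * g x + ((u x - u a) * f x + u a * f x)) has_integral
        (B + F a * (u b - u a) + (A + u a * (F b - F a)))) {a..b}"
    by (intro has_integral_add hA hB hg hf)
  moreover have "(\<lambda>x. g x * (F x - F a) + F a * g x + ((u x - u a) * f x + u a * f x)) = (\<lambda>x. g x * F x + u x * f x)"
    by (auto simp: algebra_simps)
  moreover have "B + F a * (u b - u a) + (A + u a * (F b - F a)) = u b * F b - u a * F a"
  proof -
    have "B + F a * (u b - u a) + (A + u a * (F b - F a)) = (A + B) + F a * (u b - u a) + u a * (F b - F a)"
      by (simp add: algebra_simps)
    also have "\<dots> = u b * F b - u a * F a" unfolding AB by (simp add: algebra_simps)
    finally show ?thesis .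
  qed
  ultimately show ?thesis by simp
qed




lemma cinner_herm:
  assumes "hermitian_mat A"
  shows "cinner z (A *v w) = cinner (A *v z) w"
proof -
  have "cinner z (A *v w) = (\<Sum>i\<in>UNIV. \<Sum>j\<in>UNIV. cnj (z $ i) * (A $ i $ j * w $ j))"
    by (simp add: cinner_def matrix_vector_mult_def sum_distrib_left)
  also have "\<dots> = (\<Sum>j\<in>UNIV. \<Sum>i\<in>UNIV. cnj (z $ i) * (A $ i $ j * w $ j))"
    by (rule sum.swap)
  also have "\<dots> = (\<Sum>j\<in>UNIV. \<Sum>i\<in>UNIV. cnj (A $ j $ i * z $ i) * w $ j)"
    using assms unfolding hermitian_mat_def
    by (intro sum.cong refl) (metis (no_types, lifting) complex_cnj_cnj complex_cnj_mult mult.assoc mult.commute)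
  also have "\<dots> = cinner (A *v z) w"
    by (simp add: cinner_def matrix_vector_mult_def sum_distrib_right)
  finally show ?thesis .
qed

lemma cinner_scale_right: "cinner z (c *s w) = c * cinner z w"
  by (simp add: cinner_def sum_distrib_left algebra_simps)
lemma cinner_scale_left: "cinner (c *s z) w = cnj c * cinner z w"
  by (simp add: cinner_def sum_distrib_left algebra_simps)
lemma cinner_diff_right: "cinner z (w1 - w2) = cinner z w1 - cinner z w2"
  by (simp add: cinner_def sum_subtractf algebra_simps)
lemma cinner_diff_left: "cinner (z1 - z2) w = cinner z1 w - cinner z2 w"
  by (simp add: cinner_def sum_subtractf algebra_simps)
lemma cinner_add_right: "cinner z (w1 + w2) = cinner z w1 + cinner z w2"
  by (simp add: cinner_def sum.distrib algebra_simps)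
lemma cinner_add_left: "cinner (z1 + z2) w = cinner z1 w + cinner z2 w"
  by (simp add: cinner_def sum.distrib algebra_simps)

lemma herm_cancel:
  assumes "hermitian_mat A"
  shows "cinner z (A *v w - complex_of_real E *s w) - cinner (A *v z - complex_of_real E *s z) w = 0"
  using cinner_herm[OF assms, of z w]
  by (simp add: cinner_diff_right cinner_diff_left cinner_scale_right cinner_scale_left)

lemma sq_abs_int:
  fixes h :: "real \<Rightarrow> complex^'n"
  assumes "square_integrable S h" "S \<in> sets lebesgue" "{a..b} \<subseteq> S"
  shows "h absolutely_integrable_on {a..b}"
proof -
  have "h \<in> borel_measurable (lebesgue_on S)"
    using assms measurable_on_iff_borel_measurable unfolding square_integrable_def by blast
  then have m: "h \<in> borel_measurable (lebesgue_on {a..b})"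
    using measurable_restrict_mono assms(3) by blast
  have "(\<lambda>x. (norm (h x))\<^sup>2) integrable_on {a..b}"
    using assms integrable_on_subinterval unfolding square_integrable_def by blast
  then have i: "(\<lambda>x. 1 + (norm (h x))\<^sup>2) integrable_on {a..b}"
    by (intro integrable_add integrable_const_ivl)
  have "norm (h x) \<le> 1 + (norm (h x))\<^sup>2" for x
  proof -
    have "0 \<le> (norm (h x) - 1/2)\<^sup>2" by simp
    then show ?thesis by (simp add: power2_eq_square algebra_simps)
  qed
  then show ?thesis
    by (intro measurable_bounded_by_integrable_imp_absolutely_integrable[OF m _ i]) auto
qed

lemma abs_int_comp:
  fixes h :: "real \<Rightarrow> complex^'n"
  assumes "h absolutely_integrable_on S"
  shows "(\<lambda>x. h x $ i) absolutely_integrable_on S" "(\<lambda>x. cnj (h x $ i)) absolutely_integrable_on S"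
proof -
  show "(\<lambda>x. h x $ i) absolutely_integrable_on S"
    using absolutely_integrable_linear[OF assms bounded_linear_vec_nth[of i]] by (simp add: o_def)
  have "bounded_linear (\<lambda>x::complex^'n. cnj (x $ i))"
    using bounded_linear_compose[OF bounded_linear_cnj bounded_linear_vec_nth[of i]] by simp
  from absolutely_integrable_linear[OF assms this]
  show "(\<lambda>x. cnj (h x $ i)) absolutely_integrable_on S" by (simp add: o_def)
qed


lemma wronskian_step:
  fixes \<psi> \<psi>1 \<psi>2 \<phi> \<phi>1 \<phi>2 :: "real \<Rightarrow> complex^'n"
  assumes herm: "\<forall>x. hermitian_mat (V x)"
    and H\<psi>: "H2_repr S \<psi> \<psi>1 \<psi>2" and H\<phi>: "H2_repr S \<phi> \<phi>1 \<phi>2"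
    and N\<psi>: "negligible {x\<in>S. \<psi>2 x \<noteq> V x *v \<psi> x - complex_of_real E *s \<psi> x}"
    and N\<phi>: "negligible {x\<in>S. \<phi>2 x \<noteq> V x *v \<phi> x - complex_of_real E *s \<phi> x}"
    and S: "S \<in> sets lebesgue" and ab: "a \<le> b" "{a..b} \<subseteq> S"
  shows "cinner (\<psi> b) (\<phi>1 b) - cinner (\<psi>1 b) (\<phi> b) = cinner (\<psi> a) (\<phi>1 a) - cinner (\<psi>1 a) (\<phi> a)"
proof -
  have aS: "a \<in> S" and bS: "b \<in> S" using ab by auto
  have d\<psi>: "\<And>x. x \<in> S \<Longrightarrow> (\<psi> has_vector_derivative \<psi>1 x) (at x within S)"
   and i\<psi>: "\<And>a b. a \<in> S \<Longrightarrow> b \<in> S \<Longrightarrow> a \<le> b \<Longrightarrow> (\<psi>2 has_integral (\<psi>1 b - \<psi>1 a)) {a..b}"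
   and s\<psi>1: "square_integrable S \<psi>1" and s\<psi>2: "square_integrable S \<psi>2"
    using H\<psi> unfolding H2_repr_def by auto
  have d\<phi>: "\<And>x. x \<in> S \<Longrightarrow> (\<phi> has_vector_derivative \<phi>1 x) (at x within S)"
   and i\<phi>: "\<And>a b. a \<in> S \<Longrightarrow> b \<in> S \<Longrightarrow> a \<le> b \<Longrightarrow> (\<phi>2 has_integral (\<phi>1 b - \<phi>1 a)) {a..b}"
   and s\<phi>1: "square_integrable S \<phi>1" and s\<phi>2: "square_integrable S \<phi>2"
    using H\<phi> unfolding H2_repr_def by auto
  have F\<psi>: "(\<psi>1 has_integral (\<psi> x - \<psi> a)) {a..x}" if "x \<in> {a..b}" for x
  proof (rule fundamental_theorem_of_calculus)
    show "a \<le> x" using that by auto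
    fix t assume "t \<in> {a..x}"
    then have "t \<in> S" "{a..x} \<subseteq> S" using that ab by auto
    then show "(\<psi> has_vector_derivative \<psi>1 t) (at t within {a..x})"
      using d\<psi> has_vector_derivative_within_subset by blast
  qed
  have F\<phi>: "(\<phi>1 has_integral (\<phi> x - \<phi> a)) {a..x}" if "x \<in> {a..b}" for x
  proof (rule fundamental_theorem_of_calculus)
    show "a \<le> x" using that by auto
    fix t assume "t \<in> {a..x}"
    then have "t \<in> S" "{a..x} \<subseteq> S" using that ab by auto
    then show "(\<phi> has_vector_derivative \<phi>1 t) (at t within {a..x})"
      using d\<phi> has_vector_derivative_within_subset by blast
  qed
  have G\<psi>: "(\<psi>2 has_integral (\<psi>1 x - \<psi>1 a)) {a..x}" if "x \<in> {a..b}" for x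
    using i\<psi>[of a x] that ab aS by auto
  have G\<phi>: "(\<phi>2 has_integral (\<phi>1 x - \<phi>1 a)) {a..x}" if "x \<in> {a..b}" for x
    using i\<phi>[of a x] that ab aS by auto
  have cnjl: "bounded_linear (\<lambda>x::complex^'n. cnj (x $ i))" for i
    using bounded_linear_compose[OF bounded_linear_cnj bounded_linear_vec_nth[of i]] by simp
  have a\<psi>1: "\<psi>1 absolutely_integrable_on {a..b}" by (rule sq_abs_int[OF s\<psi>1 S ab(2)])
  have a\<psi>2: "\<psi>2 absolutely_integrable_on {a..b}" by (rule sq_abs_int[OF s\<psi>2 S ab(2)])
  have a\<phi>1: "\<phi>1 absolutely_integrable_on {a..b}" by (rule sq_abs_int[OF s\<phi>1 S ab(2)])
  have a\<phi>2: "\<phi>2 absolutely_integrable_on {a..b}" by (rule sq_abs_int[OF s\<phi>2 S ab(2)])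
  define W where "W i x = cnj (\<psi> x $ i) * \<phi>1 x $ i - cnj (\<psi>1 x $ i) * \<phi> x $ i" for i x
  have comp: "((\<lambda>x. cnj (\<psi> x $ i) * \<phi>2 x $ i - cnj (\<psi>2 x $ i) * \<phi> x $ i) has_integral (W i b - W i a)) {a..b}" for i
  proof -
    have 1: "((\<lambda>x. cnj (\<psi>1 x $ i) * \<phi>1 x $ i + cnj (\<psi> x $ i) * \<phi>2 x $ i) has_integral
              (cnj (\<psi> b $ i) * \<phi>1 b $ i - cnj (\<psi> a $ i) * \<phi>1 a $ i)) {a..b}"
    proof (rule ibp_ac[where u="\<lambda>t. cnj (\<psi> t $ i)" and F="\<lambda>t. \<phi>1 t $ i"
                          and g="\<lambda>t. cnj (\<psi>1 t $ i)" and f="\<lambda>t. \<phi>2 t $ i"])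
      show "a \<le> b" by (rule ab)
      show "(\<lambda>t. cnj (\<psi>1 t $ i)) absolutely_integrable_on {a..b}" by (rule abs_int_comp(2)[OF a\<psi>1])
      show "(\<lambda>t. \<phi>2 t $ i) absolutely_integrable_on {a..b}" by (rule abs_int_comp(1)[OF a\<phi>2])
      fix x assume x: "x \<in> {a..b}"
      show "((\<lambda>t. cnj (\<psi>1 t $ i)) has_integral cnj (\<psi> x $ i) - cnj (\<psi> a $ i)) {a..x}"
        using has_integral_linear[OF F\<psi>[OF x] cnjl[of i]] by (simp add: o_def)
      show "((\<lambda>t. \<phi>2 t $ i) has_integral \<phi>1 x $ i - \<phi>1 a $ i) {a..x}"
        using has_integral_linear[OF G\<phi>[OF x] bounded_linear_vec_nth[of i]] by (simp add: o_def)
    qed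
    have 2: "((\<lambda>x. \<phi>1 x $ i * cnj (\<psi>1 x $ i) + \<phi> x $ i * cnj (\<psi>2 x $ i)) has_integral
              (\<phi> b $ i * cnj (\<psi>1 b $ i) - \<phi> a $ i * cnj (\<psi>1 a $ i))) {a..b}"
    proof (rule ibp_ac[where u="\<lambda>t. \<phi> t $ i" and F="\<lambda>t. cnj (\<psi>1 t $ i)"
                          and g="\<lambda>t. \<phi>1 t $ i" and f="\<lambda>t. cnj (\<psi>2 t $ i)"])
      show "a \<le> b" by (rule ab)
      show "(\<lambda>t. \<phi>1 t $ i) absolutely_integrable_on {a..b}" by (rule abs_int_comp(1)[OF a\<phi>1])
      show "(\<lambda>t. cnj (\<psi>2 t $ i)) absolutely_integrable_on {a..b}" by (rule abs_int_comp(2)[OF a\<psi>2])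
      fix x assume x: "x \<in> {a..b}"
      show "((\<lambda>t. \<phi>1 t $ i) has_integral \<phi> x $ i - \<phi> a $ i) {a..x}"
        using has_integral_linear[OF F\<phi>[OF x] bounded_linear_vec_nth[of i]] by (simp add: o_def)
      show "((\<lambda>t. cnj (\<psi>2 t $ i)) has_integral cnj (\<psi>1 x $ i) - cnj (\<psi>1 a $ i)) {a..x}"
        using has_integral_linear[OF G\<psi>[OF x] cnjl[of i]] by (simp add: o_def)
    qed
    note 3 = has_integral_diff[OF 1 2]
    have e1: "(\<lambda>x. (cnj (\<psi>1 x $ i) * \<phi>1 x $ i + cnj (\<psi> x $ i) * \<phi>2 x $ i) -
                   (\<phi>1 x $ i * cnj (\<psi>1 x $ i) + \<phi> x $ i * cnj (\<psi>2 x $ i)))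
             = (\<lambda>x. cnj (\<psi> x $ i) * \<phi>2 x $ i - cnj (\<psi>2 x $ i) * \<phi> x $ i)"
      by (auto simp: algebra_simps)
    have e2: "(cnj (\<psi> b $ i) * \<phi>1 b $ i - cnj (\<psi> a $ i) * \<phi>1 a $ i) -
              (\<phi> b $ i * cnj (\<psi>1 b $ i) - \<phi> a $ i * cnj (\<psi>1 a $ i)) = W i b - W i a"
      by (simp add: W_def algebra_simps)
    show ?thesis using 3 unfolding e1 e2 .
  qed
  have sum: "((\<lambda>x. \<Sum>i\<in>UNIV. cnj (\<psi> x $ i) * \<phi>2 x $ i - cnj (\<psi>2 x $ i) * \<phi> x $ i) has_integral
             (\<Sum>i\<in>UNIV. W i b - W i a)) {a..b}"
    by (rule has_integral_sum) (use comp in auto)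
  have e3: "(\<lambda>x. \<Sum>i\<in>UNIV. cnj (\<psi> x $ i) * \<phi>2 x $ i - cnj (\<psi>2 x $ i) * \<phi> x $ i)
          = (\<lambda>x. cinner (\<psi> x) (\<phi>2 x) - cinner (\<psi>2 x) (\<phi> x))"
    by (simp add: cinner_def sum_subtractf)
  have e4: "(\<Sum>i\<in>UNIV. W i b - W i a) = (cinner (\<psi> b) (\<phi>1 b) - cinner (\<psi>1 b) (\<phi> b)) - (cinner (\<psi> a) (\<phi>1 a) - cinner (\<psi>1 a) (\<phi> a))"
    by (simp add: W_def cinner_def sum_subtractf)
  have h: "((\<lambda>x. cinner (\<psi> x) (\<phi>2 x) - cinner (\<psi>2 x) (\<phi> x)) has_integral
          ((cinner (\<psi> b) (\<phi>1 b) - cinner (\<psi>1 b) (\<phi> b)) - (cinner (\<psi> a) (\<phi>1 a) - cinner (\<psi>1 a) (\<phi> a)))) {a..b}"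
    using sum unfolding e3 e4 .
  have z: "((\<lambda>x. cinner (\<psi> x) (\<phi>2 x) - cinner (\<psi>2 x) (\<phi> x)) has_integral 0) {a..b}"
  proof (rule has_integral_spike[OF _ _ has_integral_0])
    show "negligible ({x\<in>S. \<psi>2 x \<noteq> V x *v \<psi> x - complex_of_real E *s \<psi> x} \<union> {x\<in>S. \<phi>2 x \<noteq> V x *v \<phi> x - complex_of_real E *s \<phi> x})"
      using N\<psi> N\<phi> by (rule negligible_Un)
    fix x assume x: "x \<in> {a..b} - ({x\<in>S. \<psi>2 x \<noteq> V x *v \<psi> x - complex_of_real E *s \<psi> x} \<union> {x\<in>S. \<phi>2 x \<noteq> V x *v \<phi> x - complex_of_real E *s \<phi> x})"
    then have "x \<in> S" using ab by auto
    with x have "\<psi>2 x = V x *v \<psi> x - complex_of_real E *s \<psi> x" "\<phi>2 x = V x *v \<phi> x - complex_of_real E *s \<phi> x"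
      by auto
    then show "cinner (\<psi> x) (\<phi>2 x) - cinner (\<psi>2 x) (\<phi> x) = 0"
      using herm_cancel[where A="V x" and z="\<psi> x" and E=E and w="\<phi> x"] herm by simp
  qed
  show ?thesis using has_integral_unique[OF h z] by simp
qed


lemma cinner_bound: "norm (cinner (z::complex^'n) w) \<le> real CARD('n) * ((norm z)\<^sup>2 + (norm w)\<^sup>2)"
proof -
  have "norm (cinner z w) \<le> (\<Sum>i\<in>UNIV. norm (cnj (z $ i) * w $ i))"
    unfolding cinner_def by (rule norm_sum)
  also have "\<dots> \<le> (\<Sum>i\<in>(UNIV::'n set). (norm z)\<^sup>2 + (norm w)\<^sup>2)"
  proof (rule sum_mono)
    fix i
    have n1: "norm (z $ i) \<le> norm z" by (rule Finite_Cartesian_Product.norm_nth_le)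
    have n2: "norm (w $ i) \<le> norm w" by (rule Finite_Cartesian_Product.norm_nth_le)
    have "norm (cnj (z $ i) * w $ i) = norm (z $ i) * norm (w $ i)" by (simp add: norm_mult)
    also have "\<dots> \<le> norm z * norm w" using n1 n2 by (simp add: mult_mono)
    also have "\<dots> \<le> (norm z)\<^sup>2 + (norm w)\<^sup>2"
    proof (cases "norm z \<le> norm w")
      case True
      then have "norm z * norm w \<le> norm w * norm w" by (simp add: mult_right_mono)
      moreover have "0 \<le> norm z * norm z" by simp
      ultimately have "norm z * norm w \<le> norm z * norm z + norm w * norm w" by linarith
      then show ?thesis by (simp add: power2_eq_square)
    next
      case False
      then have "norm z * norm w \<le> norm z * norm z" by (simp add: mult_left_mono)
      moreover have "0 \<le> norm w * norm w" by simp
      ultimately have "norm z * norm w \<le> norm z * norm z + norm w * norm w" by linarith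
      then show ?thesis by (simp add: power2_eq_square)
    qed
    finally show "norm (cnj (z $ i) * w $ i) \<le> (norm z)\<^sup>2 + (norm w)\<^sup>2" .
  qed
  also have "\<dots> = real CARD('n) * ((norm z)\<^sup>2 + (norm w)\<^sup>2)" by simp
  finally show ?thesis .
qed

lemma const_le_integrable_zero:
  fixes G :: "real \<Rightarrow> real"
  assumes S: "S = {0..} \<or> S = {..0}" and G: "G integrable_on S" and le: "\<And>x. x \<in> S \<Longrightarrow> r \<le> G x"
    and r: "0 \<le> r"
  shows "r = 0"
proof (rule ccontr)
  assume "r \<noteq> 0"
  with r have rpos: "r > 0" by simp
  have Gnn: "\<forall>x\<in>S. 0 \<le> G x" using le r by (meson order_trans)
  obtain n :: nat where n: "integral S G / r < real n" using reals_Archimedean2 by blast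
  define I where "I = (if S = {0..} then {0..real n} else {-real n..0})"
  have IS: "I \<subseteq> S" using S by (auto simp: I_def)
  have GI: "G integrable_on I" using S G by (auto simp: I_def intro: integrable_on_subinterval)
  have cI: "integral I (\<lambda>x. r) = real n * r" using S by (auto simp: I_def)
  have cint: "(\<lambda>x. r) integrable_on I" by (auto simp: I_def)
  have "integral I (\<lambda>x. r) \<le> integral I G"
    by (rule integral_le[OF cint GI]) (use le IS in auto)
  also have "\<dots> \<le> integral S G"
    by (rule integral_subset_le[OF IS GI G Gnn])
  finally have "real n * r \<le> integral S G" using cI by simp
  with n rpos show False by (simp add: field_simps)
qed

lemma ell_mem:
  "p \<in> ell S V E \<longleftrightarrow> (\<exists>\<psi> \<psi>1 \<psi>2. p = (\<psi> 0, \<psi>1 0) \<and> H2_repr S \<psi> \<psi>1 \<psi>2 \<and>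
       negligible {x\<in>S. \<psi>2 x \<noteq> V x *v \<psi> x - complex_of_real E *s \<psi> x})"
  unfolding ell_def by blast

lemma isotropic_half:
  fixes V :: "real \<Rightarrow> complex^'n^'n"
  assumes herm: "\<forall>x. hermitian_mat (V x)" and S: "S = {0..} \<or> S = {..0}"
    and p: "p \<in> ell S V E" and q: "q \<in> ell S V E"
  shows "omega p q = 0"
proof -
  obtain \<psi> \<psi>1 \<psi>2 where p': "p = (\<psi> 0, \<psi>1 0)" and H\<psi>: "H2_repr S \<psi> \<psi>1 \<psi>2"
    and N\<psi>: "negligible {x\<in>S. \<psi>2 x \<noteq> V x *v \<psi> x - complex_of_real E *s \<psi> x}"
    using p unfolding ell_mem by blast
  obtain \<phi> \<phi>1 \<phi>2 where q': "q = (\<phi> 0, \<phi>1 0)" and H\<phi>: "H2_repr S \<phi> \<phi>1 \<phi>2"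
    and N\<phi>: "negligible {x\<in>S. \<phi>2 x \<noteq> V x *v \<phi> x - complex_of_real E *s \<phi> x}"
    using q unfolding ell_mem by blast
  have Sleb: "S \<in> sets lebesgue" using S by auto
  define W where "W x = cinner (\<psi> x) (\<phi>1 x) - cinner (\<psi>1 x) (\<phi> x)" for x
  have Wc: "W x = W 0" if x: "x \<in> S" for x
  proof (cases "0 \<le> x")
    case True
    have "{0..x} \<subseteq> S" using S x True by auto
    from wronskian_step[OF herm H\<psi> H\<phi> N\<psi> N\<phi> Sleb True this] show ?thesis by (simp add: W_def)
  next
    case False
    have "{x..0} \<subseteq> S" using S x False by auto
    from wronskian_step[OF herm H\<psi> H\<phi> N\<psi> N\<phi> Sleb _ this] False show ?thesis by (simp add: W_def)
  qed
  define G where "G x = real CARD('n) * (((norm (\<psi> x))\<^sup>2 + (norm (\<phi>1 x))\<^sup>2) + ((norm (\<psi>1 x))\<^sup>2 + (norm (\<phi> x))\<^sup>2))" for x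
  have G: "G integrable_on S"
  proof -
    have "(\<lambda>x. (norm (\<psi> x))\<^sup>2) integrable_on S" "(\<lambda>x. (norm (\<psi>1 x))\<^sup>2) integrable_on S"
         "(\<lambda>x. (norm (\<phi> x))\<^sup>2) integrable_on S" "(\<lambda>x. (norm (\<phi>1 x))\<^sup>2) integrable_on S"
      using H\<psi> H\<phi> unfolding H2_repr_def square_integrable_def by auto
    then show ?thesis unfolding G_def
      by (intro integrable_on_mult_right integrable_add)
  qed
  have le: "norm (W 0) \<le> G x" if "x \<in> S" for x
  proof -
    have "norm (W 0) = norm (W x)" using Wc[OF that] by simp
    also have "\<dots> \<le> norm (cinner (\<psi> x) (\<phi>1 x)) + norm (cinner (\<psi>1 x) (\<phi> x))"
      unfolding W_def by (rule norm_triangle_ineq4)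
    also have "\<dots> \<le> G x"
      using cinner_bound[of "\<psi> x" "\<phi>1 x"] cinner_bound[of "\<psi>1 x" "\<phi> x"] by (simp add: G_def algebra_simps)
    finally show ?thesis .
  qed
  have "norm (W 0) = 0" by (rule const_le_integrable_zero[OF S G le norm_ge_zero])
  then show ?thesis by (simp add: p' q' omega_def W_def)
qed




lemma sq_meas:
  fixes h :: "real \<Rightarrow> complex^'n"
  assumes "h measurable_on S" "S \<in> sets lebesgue"
  shows "(\<lambda>x. (norm (h x))\<^sup>2) \<in> borel_measurable (lebesgue_on S)"
proof -
  have [measurable]: "h \<in> borel_measurable (lebesgue_on S)"
    using assms measurable_on_iff_borel_measurable by blast
  show ?thesis by measurable
qed

lemma sqint_add:
  fixes f g :: "real \<Rightarrow> complex^'n"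
  assumes f: "square_integrable S f" and g: "square_integrable S g" and S: "S \<in> sets lebesgue"
  shows "square_integrable S (\<lambda>x. f x + g x)"
proof -
  have m: "(\<lambda>x. f x + g x) measurable_on S"
    using f g measurable_on_add unfolding square_integrable_def by blast
  have i: "(\<lambda>x. 2 * (norm (f x))\<^sup>2 + 2 * (norm (g x))\<^sup>2) integrable_on S"
    using f g unfolding square_integrable_def by (intro integrable_add integrable_on_mult_right) auto
  have le: "norm ((norm (f x + g x))\<^sup>2) \<le> 2 * (norm (f x))\<^sup>2 + 2 * (norm (g x))\<^sup>2" for x
  proof -
    have "norm (f x + g x) \<le> norm (f x) + norm (g x)" by (rule norm_triangle_ineq)
    then have "(norm (f x + g x))\<^sup>2 \<le> (norm (f x) + norm (g x))\<^sup>2"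
      by (simp add: power_mono)
    also have "\<dots> \<le> 2 * (norm (f x))\<^sup>2 + 2 * (norm (g x))\<^sup>2"
    proof -
      have "0 \<le> (norm (f x) - norm (g x)) * (norm (f x) - norm (g x))" by simp
      then show ?thesis by (simp add: power2_eq_square algebra_simps)
    qed
    finally show ?thesis by simp
  qed
  have "(\<lambda>x. (norm (f x + g x))\<^sup>2) integrable_on S"
    by (rule measurable_bounded_by_integrable_imp_integrable[OF sq_meas[OF m S] i le S])
  with m show ?thesis unfolding square_integrable_def by blast
qed

lemma sqint_neg:
  fixes f :: "real \<Rightarrow> complex^'n"
  assumes f: "square_integrable S f"
  shows "square_integrable S (\<lambda>x. - f x)"
  using f measurable_on_minus unfolding square_integrable_def by auto

lemma sqint_diff:
  fixes f g :: "real \<Rightarrow> complex^'n"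
  assumes f: "square_integrable S f" and g: "square_integrable S g" and S: "S \<in> sets lebesgue"
  shows "square_integrable S (\<lambda>x. f x - g x)"
  using sqint_add[OF f sqint_neg[OF g] S] by simp

lemma H2_add:
  assumes A: "H2_repr S \<psi> \<psi>1 \<psi>2" and B: "H2_repr S \<phi> \<phi>1 \<phi>2" and S: "S \<in> sets lebesgue"
  shows "H2_repr S (\<lambda>x. \<psi> x + \<phi> x) (\<lambda>x. \<psi>1 x + \<phi>1 x) (\<lambda>x. \<psi>2 x + \<phi>2 x)"
  unfolding H2_repr_def
proof (intro conjI ballI impI)
  fix x assume "x \<in> S"
  then show "((\<lambda>x. \<psi> x + \<phi> x) has_vector_derivative \<psi>1 x + \<phi>1 x) (at x within S)"
    using A B unfolding H2_repr_def by (intro has_vector_derivative_add) auto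
next
  fix a b assume "a \<in> S" "b \<in> S" "a \<le> b"
  then have "(\<psi>2 has_integral \<psi>1 b - \<psi>1 a) {a..b}" "(\<phi>2 has_integral \<phi>1 b - \<phi>1 a) {a..b}"
    using A B unfolding H2_repr_def by auto
  from has_integral_add[OF this]
  show "((\<lambda>x. \<psi>2 x + \<phi>2 x) has_integral \<psi>1 b + \<phi>1 b - (\<psi>1 a + \<phi>1 a)) {a..b}"
    by (simp add: algebra_simps)
next
  show "square_integrable S (\<lambda>x. \<psi> x + \<phi> x)" "square_integrable S (\<lambda>x. \<psi>1 x + \<phi>1 x)"
       "square_integrable S (\<lambda>x. \<psi>2 x + \<phi>2 x)"
    using A B S unfolding H2_repr_def by (auto intro: sqint_add)
qed

lemma H2_neg:
  assumes A: "H2_repr S \<psi> \<psi>1 \<psi>2"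
  shows "H2_repr S (\<lambda>x. - \<psi> x) (\<lambda>x. - \<psi>1 x) (\<lambda>x. - \<psi>2 x)"
  unfolding H2_repr_def
proof (intro conjI ballI impI)
  fix x assume "x \<in> S"
  then show "((\<lambda>x. - \<psi> x) has_vector_derivative - \<psi>1 x) (at x within S)"
    using A unfolding H2_repr_def by (intro has_vector_derivative_minus) auto
next
  fix a b assume "a \<in> S" "b \<in> S" "a \<le> b"
  then have "(\<psi>2 has_integral \<psi>1 b - \<psi>1 a) {a..b}"
    using A unfolding H2_repr_def by auto
  from has_integral_neg[OF this]
  show "((\<lambda>x. - \<psi>2 x) has_integral - \<psi>1 b - - \<psi>1 a) {a..b}"
    by (simp add: algebra_simps)
next
  show "square_integrable S (\<lambda>x. - \<psi> x)" "square_integrable S (\<lambda>x. - \<psi>1 x)"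
       "square_integrable S (\<lambda>x. - \<psi>2 x)"
    using A unfolding H2_repr_def by (auto intro: sqint_neg)
qed

lemma H2_zero: "S \<in> sets lebesgue \<Longrightarrow> H2_repr S (\<lambda>x. 0) (\<lambda>x. 0) (\<lambda>x. 0)"
  unfolding H2_repr_def square_integrable_def by (auto simp: integrable_0)

lemma lin_add:
  fixes V :: "complex^'n^'n"
  shows "a = V *v p - c *s p \<Longrightarrow> b = V *v q - c *s q \<Longrightarrow> a + b = V *v (p + q) - c *s (p + q)"
  by (simp add: matrix_vector_right_distrib vector_add_ldistrib algebra_simps)

lemma lin_neg:
  fixes V :: "complex^'n^'n"
  shows "a = V *v p - c *s p \<Longrightarrow> - a = V *v (- p) - c *s (- p)"
  by (simp add: vec.neg vector_smult_rneg)

lemma ell_add: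
  assumes "p \<in> ell S V E" "q \<in> ell S V E" "S \<in> sets lebesgue"
  shows "p + q \<in> ell S V E"
proof -
  obtain \<psi> \<psi>1 \<psi>2 where p': "p = (\<psi> 0, \<psi>1 0)" and H\<psi>: "H2_repr S \<psi> \<psi>1 \<psi>2"
    and N\<psi>: "negligible {x\<in>S. \<psi>2 x \<noteq> V x *v \<psi> x - complex_of_real E *s \<psi> x}"
    using assms unfolding ell_mem by blast
  obtain \<phi> \<phi>1 \<phi>2 where q': "q = (\<phi> 0, \<phi>1 0)" and H\<phi>: "H2_repr S \<phi> \<phi>1 \<phi>2"
    and N\<phi>: "negligible {x\<in>S. \<phi>2 x \<noteq> V x *v \<phi> x - complex_of_real E *s \<phi> x}"
    using assms unfolding ell_mem by blast
  have N: "negligible {x\<in>S. \<psi>2 x + \<phi>2 x \<noteq> V x *v (\<psi> x + \<phi> x) - complex_of_real E *s (\<psi> x + \<phi> x)}"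
    by (rule negligible_subset[OF negligible_Un[OF N\<psi> N\<phi>]])
       (auto simp: lin_add)
  show ?thesis unfolding ell_mem
    by (intro exI[of _ "\<lambda>x. \<psi> x + \<phi> x"] exI[of _ "\<lambda>x. \<psi>1 x + \<phi>1 x"] exI[of _ "\<lambda>x. \<psi>2 x + \<phi>2 x"])
       (use p' q' H2_add[OF H\<psi> H\<phi> assms(3)] N in auto)
qed

lemma ell_neg:
  assumes "p \<in> ell S V E"
  shows "- p \<in> ell S V E"
proof -
  obtain \<psi> \<psi>1 \<psi>2 where p': "p = (\<psi> 0, \<psi>1 0)" and H\<psi>: "H2_repr S \<psi> \<psi>1 \<psi>2"
    and N\<psi>: "negligible {x\<in>S. \<psi>2 x \<noteq> V x *v \<psi> x - complex_of_real E *s \<psi> x}"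
    using assms unfolding ell_mem by blast
  have N: "negligible {x\<in>S. - \<psi>2 x \<noteq> V x *v (- \<psi> x) - complex_of_real E *s (- \<psi> x)}"
  proof (rule negligible_subset[OF N\<psi>], rule subsetI)
    fix x assume "x \<in> {x\<in>S. - \<psi>2 x \<noteq> V x *v (- \<psi> x) - complex_of_real E *s (- \<psi> x)}"
    then show "x \<in> {x\<in>S. \<psi>2 x \<noteq> V x *v \<psi> x - complex_of_real E *s \<psi> x}"
      using lin_neg[where a="\<psi>2 x" and V="V x" and p="\<psi> x" and c="complex_of_real E"] by auto
  qed
  show ?thesis unfolding ell_mem
    by (intro exI[of _ "\<lambda>x. - \<psi> x"] exI[of _ "\<lambda>x. - \<psi>1 x"] exI[of _ "\<lambda>x. - \<psi>2 x"])
       (use p' H2_neg[OF H\<psi>] N in auto)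
qed

lemma ell_zero:
  assumes "S \<in> sets lebesgue"
  shows "0 \<in> ell S V E"
  unfolding ell_mem
  by (intro exI[of _ "\<lambda>x. 0"] exI[of _ "\<lambda>x. 0"] exI[of _ "\<lambda>x. 0"]) (auto simp: H2_zero assms zero_prod_def)

lemma ell_diff:
  assumes "p \<in> ell S V E" "q \<in> ell S V E" "S \<in> sets lebesgue"
  shows "p - q \<in> ell S V E"
  using ell_add[OF assms(1) ell_neg[OF assms(2)] assms(3)] by simp


lemma cinner_axis_right: "cinner z (axis i 1) = cnj (z $ i)"
proof -
  have "cinner z (axis i 1) = (\<Sum>j\<in>UNIV. if j = i then cnj (z $ i) else 0)"
    unfolding cinner_def by (rule sum.cong) (auto simp: axis_def)
  then show ?thesis by simp
qed

lemma cinner_axis_left: "cinner (axis i 1) w = w $ i"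
proof -
  have "cinner (axis i 1) w = (\<Sum>j\<in>UNIV. if j = i then w $ i else 0)"
    unfolding cinner_def by (rule sum.cong) (auto simp: axis_def)
  then show ?thesis by simp
qed

lemma cinner_zero_right[simp]: "cinner z 0 = 0" by (simp add: cinner_def)
lemma cinner_zero_left[simp]: "cinner 0 z = 0" by (simp add: cinner_def)

lemma omega_add_left: "omega (x + y) z = omega x z + omega y z"
  by (simp add: omega_def cinner_add_left algebra_simps)
lemma omega_diff_left: "omega (x - y) z = omega x z - omega y z"
  by (simp add: omega_def cinner_diff_left algebra_simps)
lemma omega_add_right: "omega z (x + y) = omega z x + omega z y"
  by (simp add: omega_def cinner_add_right algebra_simps)

lemma omega_nondeg:
  assumes "\<forall>y. omega b y = 0"
  shows "b = 0"
proof -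
  have "fst b $ i = 0" for i
    using assms[rule_format, of "(0, axis i 1)"] by (simp add: omega_def cinner_axis_right)
  moreover have "snd b $ i = 0" for i
    using assms[rule_format, of "(axis i 1, 0)"] by (simp add: omega_def cinner_axis_right)
  ultimately show ?thesis by (simp add: prod_eq_iff vec_eq_iff)
qed

lemma lagr_abstract:
  assumes i1: "\<And>p q. p \<in> L1 \<Longrightarrow> q \<in> L1 \<Longrightarrow> omega p q = 0"
    and i2: "\<And>p q. p \<in> L2 \<Longrightarrow> q \<in> L2 \<Longrightarrow> omega p q = 0"
    and sp: "\<forall>x. \<exists>a\<in>L1. \<exists>b\<in>L2. x = a + b"
  shows "lagrangian L1"
  unfolding lagrangian_def
proof
  show "L1 \<subseteq> annihilator L1" using i1 by (auto simp: annihilator_def)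
  show "annihilator L1 \<subseteq> L1"
  proof
    fix x assume x: "x \<in> annihilator L1"
    obtain a b where a: "a \<in> L1" and b: "b \<in> L2" and xab: "x = a + b" using sp by blast
    have "omega b y = 0" for y
    proof -
      obtain c d where c: "c \<in> L1" and d: "d \<in> L2" and ycd: "y = c + d" using sp by blast
      have "b = x - a" using xab by simp
      then have "omega b c = omega x c - omega a c" by (simp add: omega_diff_left)
      also have "\<dots> = 0" using x c i1[OF a c] by (simp add: annihilator_def)
      finally have 1: "omega b c = 0" .
      have 2: "omega b d = 0" using i2[OF b d] .
      show ?thesis using 1 2 ycd by (simp add: omega_add_right)
    qed
    then have "b = 0" using omega_nondeg by blast
    then show "x \<in> L1" using xab a by simp
  qed
qed




lemma neg0: "negligible (sym_diff {0::real..} {0<..})"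
proof -
  have "sym_diff {0::real..} {0<..} = {0}" by auto
  then show ?thesis by simp
qed

lemma sqint_glue:
  fixes f g :: "real \<Rightarrow> complex^'n"
  assumes f: "square_integrable {..0} f" and g: "square_integrable {0..} g"
  shows "square_integrable UNIV (\<lambda>x. if x \<in> {..0} then f x else g x)"
proof -
  have fm: "f measurable_on {..0}" and fi: "(\<lambda>x. (norm (f x))\<^sup>2) integrable_on {..0}"
    using f unfolding square_integrable_def by auto
  have gm0: "g measurable_on {0..}" and gi0: "(\<lambda>x. (norm (g x))\<^sup>2) integrable_on {0..}"
    using g unfolding square_integrable_def by auto
  have gm: "g measurable_on {0<..}" by (rule measurable_on_spike_set[OF gm0 neg0])
  have gi: "(\<lambda>x. (norm (g x))\<^sup>2) integrable_on {0<..}" by (rule iffD1[OF integrable_spike_set_eq[OF neg0] gi0])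
  have m1: "(\<lambda>x. if x \<in> {..0} then f x else 0) measurable_on UNIV"
    using fm by (simp only: measurable_on_UNIV)
  have m2: "(\<lambda>x. if x \<in> {0<..} then g x else 0) measurable_on UNIV"
    using gm by (simp only: measurable_on_UNIV)
  have e: "(\<lambda>x. if x \<in> {..0} then f x else g x) = (\<lambda>x. (if x \<in> {..0} then f x else 0) + (if x \<in> {0<..} then g x else 0))"
    by auto
  have m: "(\<lambda>x. if x \<in> {..0} then f x else g x) measurable_on UNIV"
    unfolding e by (rule measurable_on_add[OF m1 m2])
  have i1: "(\<lambda>x. if x \<in> {..0} then (norm (f x))\<^sup>2 else 0) integrable_on UNIV"
    using fi by (simp only: integrable_restrict_UNIV)
  have i2: "(\<lambda>x. if x \<in> {0<..} then (norm (g x))\<^sup>2 else 0) integrable_on UNIV"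
    using gi by (simp only: integrable_restrict_UNIV)
  have e2: "(\<lambda>x. (norm (if x \<in> {..0} then f x else g x))\<^sup>2) = (\<lambda>x. (if x \<in> {..0} then (norm (f x))\<^sup>2 else 0) + (if x \<in> {0<..} then (norm (g x))\<^sup>2 else 0))"
    by auto
  have "(\<lambda>x. (norm (if x \<in> {..0} then f x else g x))\<^sup>2) integrable_on UNIV"
    unfolding e2 by (rule integrable_add[OF i1 i2])
  with m show ?thesis unfolding square_integrable_def by blast
qed

lemma H2_glue:
  fixes \<psi> \<psi>1 \<psi>2 \<phi> \<phi>1 \<phi>2 :: "real \<Rightarrow> complex^'n"
  assumes H\<psi>: "H2_repr {0..} \<psi> \<psi>1 \<psi>2" and H\<phi>: "H2_repr {..0} \<phi> \<phi>1 \<phi>2"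
    and e0: "\<psi> 0 = \<phi> 0" and e1: "\<psi>1 0 = \<phi>1 0"
  shows "H2_repr UNIV (\<lambda>x. if x \<in> {..0} then \<phi> x else \<psi> x) (\<lambda>x. if x \<in> {..0} then \<phi>1 x else \<psi>1 x)
                      (\<lambda>x. if x \<in> {..0} then \<phi>2 x else \<psi>2 x)"
  unfolding H2_repr_def
proof (intro conjI ballI impI)
  have d\<psi>: "\<And>x. x \<in> {0..} \<Longrightarrow> (\<psi> has_vector_derivative \<psi>1 x) (at x within {0..})"
   and i\<psi>: "\<And>a b. a \<in> {0..} \<Longrightarrow> b \<in> {0..} \<Longrightarrow> a \<le> b \<Longrightarrow> (\<psi>2 has_integral (\<psi>1 b - \<psi>1 a)) {a..b}"
    using H\<psi> unfolding H2_repr_def by auto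
  have d\<phi>: "\<And>x. x \<in> {..0} \<Longrightarrow> (\<phi> has_vector_derivative \<phi>1 x) (at x within {..0})"
   and i\<phi>: "\<And>a b. a \<in> {..0} \<Longrightarrow> b \<in> {..0} \<Longrightarrow> a \<le> b \<Longrightarrow> (\<phi>2 has_integral (\<phi>1 b - \<phi>1 a)) {a..b}"
    using H\<phi> unfolding H2_repr_def by auto
  fix x :: real
  show "((\<lambda>x. if x \<in> {..0} then \<phi> x else \<psi> x) has_vector_derivative
          (if x \<in> {..0} then \<phi>1 x else \<psi>1 x)) (at x within UNIV)"
  proof (rule has_vector_derivative_If_within_closures[where T="{0<..}"])
    show "x \<in> {..0} \<union> {0<..}" by auto
    show "UNIV = {..(0::real)} \<union> {0<..}" by auto
    assume "x \<in> {..0} \<union> closure {..0} \<inter> closure {0<..}"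
    then have "x \<in> {..0}" by auto
    moreover have "{..0} \<union> closure {..0} \<inter> closure {0<..} = {..(0::real)}" by auto
    ultimately show "(\<phi> has_vector_derivative \<phi>1 x) (at x within {..0} \<union> closure {..0} \<inter> closure {0<..})"
      using d\<phi> by simp
  next
    assume "x \<in> {0<..} \<union> closure {..0} \<inter> closure {0<..}"
    then have "x \<in> {0..}" by auto
    moreover have "{0<..} \<union> closure {..0} \<inter> closure {0<..} = {(0::real)..}" by auto
    ultimately show "(\<psi> has_vector_derivative \<psi>1 x) (at x within {0<..} \<union> closure {..0} \<inter> closure {0<..})"
      using d\<psi> by simp
  next
    assume "x \<in> closure {..0}" "x \<in> closure {0<..}"
    then have "x = 0" by auto
    then show "\<phi> x = \<psi> x" "\<phi>1 x = \<psi>1 x" using e0 e1 by auto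
  qed
next
  have i\<psi>: "\<And>a b. a \<in> {0..} \<Longrightarrow> b \<in> {0..} \<Longrightarrow> a \<le> b \<Longrightarrow> (\<psi>2 has_integral (\<psi>1 b - \<psi>1 a)) {a..b}"
    using H\<psi> unfolding H2_repr_def by auto
  have i\<phi>: "\<And>a b. a \<in> {..0} \<Longrightarrow> b \<in> {..0} \<Longrightarrow> a \<le> b \<Longrightarrow> (\<phi>2 has_integral (\<phi>1 b - \<phi>1 a)) {a..b}"
    using H\<phi> unfolding H2_repr_def by auto
  define c1 where "c1 = (\<lambda>x::real. if x \<in> {..0} then \<phi>1 x else \<psi>1 x)"
  define c2 where "c2 = (\<lambda>x::real. if x \<in> {..0} then \<phi>2 x else \<psi>2 x)"
  have neg: "(c2 has_integral c1 b - c1 a) {a..b}" if "b \<le> 0" "a \<le> b" for a b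
  proof -
    have "(\<phi>2 has_integral \<phi>1 b - \<phi>1 a) {a..b}" using i\<phi> that by auto
    moreover have "c1 b - c1 a = \<phi>1 b - \<phi>1 a" using that by (auto simp: c1_def)
    ultimately have h: "(\<phi>2 has_integral c1 b - c1 a) {a..b}" by simp
    show ?thesis
      by (rule has_integral_spike[OF negligible_empty _ h]) (use that in \<open>auto simp: c2_def\<close>)
  qed
  have pos: "(c2 has_integral c1 b - c1 a) {a..b}" if "0 \<le> a" "a \<le> b" for a b
  proof -
    have "(\<psi>2 has_integral \<psi>1 b - \<psi>1 a) {a..b}" using i\<psi> that by auto
    moreover have "c1 b - c1 a = \<psi>1 b - \<psi>1 a"
    proof (cases "b \<le> 0")
      case True then have "a = 0" "b = 0" using that by auto
      then show ?thesis by simp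
    next
      case False then show ?thesis using that e1 by (auto simp: c1_def)
    qed
    ultimately have h: "(\<psi>2 has_integral c1 b - c1 a) {a..b}" by simp
    show ?thesis
      by (rule has_integral_spike[OF negligible_sing[of 0] _ h]) (use that in \<open>auto simp: c2_def\<close>)
  qed
  fix a b :: real assume "a \<le> b"
  show "(c2 has_integral c1 b - c1 a) {a..b}"
  proof (cases "b \<le> 0")
    case True then show ?thesis using neg \<open>a \<le> b\<close> by blast
  next
    case False
    show ?thesis
    proof (cases "0 \<le> a")
      case True then show ?thesis using pos \<open>a \<le> b\<close> by blast
    next
      case False
      have "(c2 has_integral (c1 0 - c1 a) + (c1 b - c1 0)) {a..b}"
      proof (rule has_integral_combine[of a 0 b])
        show "a \<le> 0" "0 \<le> b" using False \<open>\<not> b \<le> 0\<close> by auto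
        show "(c2 has_integral c1 0 - c1 a) {a..0}" using neg[of 0 a] False by simp
        show "(c2 has_integral c1 b - c1 0) {0..b}" using pos[of 0 b] \<open>\<not> b \<le> 0\<close> by simp
      qed
      then show ?thesis by simp
    qed
  qed
next
  show "square_integrable UNIV (\<lambda>x. if x \<in> {..0} then \<phi> x else \<psi> x)"
       "square_integrable UNIV (\<lambda>x. if x \<in> {..0} then \<phi>1 x else \<psi>1 x)"
       "square_integrable UNIV (\<lambda>x. if x \<in> {..0} then \<phi>2 x else \<psi>2 x)"
  proof -
    have A: "square_integrable {..0} \<phi>" "square_integrable {..0} \<phi>1" "square_integrable {..0} \<phi>2"
      using H\<phi> unfolding H2_repr_def by auto
    have B: "square_integrable {0..} \<psi>" "square_integrable {0..} \<psi>1" "square_integrable {0..} \<psi>2"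
      using H\<psi> unfolding H2_repr_def by auto
    show "square_integrable UNIV (\<lambda>x. if x \<in> {..0} then \<phi> x else \<psi> x)"
         "square_integrable UNIV (\<lambda>x. if x \<in> {..0} then \<phi>1 x else \<psi>1 x)"
         "square_integrable UNIV (\<lambda>x. if x \<in> {..0} then \<phi>2 x else \<psi>2 x)"
      by (rule sqint_glue[OF A(1) B(1)], rule sqint_glue[OF A(2) B(2)], rule sqint_glue[OF A(3) B(3)])
  qed
qed


lemma eqn_iff: fixes a b c :: "complex^'n" shows "(- a + b - c = 0) = (a = b - c)"
  by (auto simp: algebra_simps)

lemma notspec_inj:
  fixes V :: "real \<Rightarrow> complex^'n^'n"
  assumes "z \<notin> schrodinger_spectrum V"
    and "H2_repr UNIV \<psi> \<psi>1 \<psi>2" "negligible {x. - \<psi>2 x + V x *v \<psi> x - z *s \<psi> x \<noteq> 0}"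
  shows "\<psi> t = 0"
  using assms unfolding schrodinger_spectrum_def by blast

lemma notspec_surj:
  fixes V :: "real \<Rightarrow> complex^'n^'n"
  assumes "z \<notin> schrodinger_spectrum V" "square_integrable UNIV f"
  shows "\<exists>\<psi> \<psi>1 \<psi>2. H2_repr UNIV \<psi> \<psi>1 \<psi>2 \<and> negligible {x. - \<psi>2 x + V x *v \<psi> x - z *s \<psi> x \<noteq> f x}"
  using assms unfolding schrodinger_spectrum_def by blast

lemma inter_zero:
  fixes V :: "real \<Rightarrow> complex^'n^'n"
  assumes notspec: "complex_of_real E \<notin> schrodinger_spectrum V"
    and xp: "p \<in> ell_plus V E" and xm: "p \<in> ell_minus V E"
  shows "p = 0"
proof -
  obtain \<psi> \<psi>1 \<psi>2 where p1: "p = (\<psi> 0, \<psi>1 0)" and H\<psi>: "H2_repr {0..} \<psi> \<psi>1 \<psi>2"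
    and N\<psi>: "negligible {x\<in>{0..}. \<psi>2 x \<noteq> V x *v \<psi> x - complex_of_real E *s \<psi> x}"
    using xp unfolding ell_plus_def ell_mem by blast
  obtain \<phi> \<phi>1 \<phi>2 where p2: "p = (\<phi> 0, \<phi>1 0)" and H\<phi>: "H2_repr {..0} \<phi> \<phi>1 \<phi>2"
    and N\<phi>: "negligible {x\<in>{..0}. \<phi>2 x \<noteq> V x *v \<phi> x - complex_of_real E *s \<phi> x}"
    using xm unfolding ell_minus_def ell_mem by blast
  have e0: "\<psi> 0 = \<phi> 0" and e1: "\<psi>1 0 = \<phi>1 0" using p1 p2 by auto
  define c where "c = (\<lambda>x. if x \<in> {..0} then \<phi> x else \<psi> x)"
  define c1 where "c1 = (\<lambda>x. if x \<in> {..0} then \<phi>1 x else \<psi>1 x)"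
  define c2 where "c2 = (\<lambda>x. if x \<in> {..0} then \<phi>2 x else \<psi>2 x)"
  have H: "H2_repr UNIV c c1 c2" unfolding c_def c1_def c2_def by (rule H2_glue[OF H\<psi> H\<phi> e0 e1])
  have N: "negligible {x. - c2 x + V x *v c x - complex_of_real E *s c x \<noteq> 0}"
  proof (rule negligible_subset[OF negligible_Un[OF N\<phi> N\<psi>]], rule subsetI)
    fix x assume "x \<in> {x. - c2 x + V x *v c x - complex_of_real E *s c x \<noteq> 0}"
    then have "c2 x \<noteq> V x *v c x - complex_of_real E *s c x" using eqn_iff by blast
    then show "x \<in> {x\<in>{..0}. \<phi>2 x \<noteq> V x *v \<phi> x - complex_of_real E *s \<phi> x} \<union>
                   {x\<in>{0..}. \<psi>2 x \<noteq> V x *v \<psi> x - complex_of_real E *s \<psi> x}"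
      by (cases "x \<le> 0") (auto simp: c_def c2_def)
  qed
  have c0: "c t = 0" for t by (rule notspec_inj[OF notspec H N])
  then have cz: "c = (\<lambda>t. 0)" by auto
  have "(c has_vector_derivative c1 0) (at 0)" using H unfolding H2_repr_def by auto
  then have "((\<lambda>t. 0) has_vector_derivative c1 0) (at 0)" using cz by simp
  moreover have "((\<lambda>t. 0) has_vector_derivative 0) (at (0::real))" by (rule has_vector_derivative_const)
  ultimately have "c1 0 = 0" by (rule vector_derivative_unique_at)
  then have "\<phi>1 0 = 0" by (simp add: c1_def)
  moreover have "\<phi> 0 = 0" using c0[of 0] by (simp add: c_def)
  ultimately show ?thesis using p2 by (simp add: zero_prod_def)
qed




lemma mv_cont: "continuous_on UNIV (\<lambda>p::(complex^'n^'n) \<times> (complex^'n). fst p *v snd p)"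
  unfolding matrix_vector_mult_def by (intro continuous_intros)

lemma norm_mv:
  fixes A :: "complex^'n^'n"
  shows "norm (A *v x) \<le> real CARD('n) * real CARD('n) * norm A * norm x"
proof -
  have c: "norm ((A *v x) $ i) \<le> real CARD('n) * (norm A * norm x)" for i
  proof -
    have "norm ((A *v x) $ i) = norm (\<Sum>j\<in>UNIV. A $ i $ j * x $ j)" by (simp add: matrix_vector_mult_def)
    also have "\<dots> \<le> (\<Sum>j\<in>UNIV. norm (A $ i $ j * x $ j))" by (rule norm_sum)
    also have "\<dots> \<le> (\<Sum>j\<in>(UNIV::'n set). norm A * norm x)"
    proof (rule sum_mono)
      fix j
      have "norm (A $ i $ j) \<le> norm (A $ i)" by (rule Finite_Cartesian_Product.norm_nth_le)
      also have "\<dots> \<le> norm A" by (rule Finite_Cartesian_Product.norm_nth_le)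
      finally have 1: "norm (A $ i $ j) \<le> norm A" .
      have 2: "norm (x $ j) \<le> norm x" by (rule Finite_Cartesian_Product.norm_nth_le)
      show "norm (A $ i $ j * x $ j) \<le> norm A * norm x" unfolding norm_mult using 1 2 by (simp add: mult_mono)
    qed
    also have "\<dots> = real CARD('n) * (norm A * norm x)" by simp
    finally show ?thesis .
  qed
  have "norm (A *v x) \<le> (\<Sum>i\<in>UNIV. norm ((A *v x) $ i))" unfolding norm_vec_def by (rule L2_set_le_sum) simp
  also have "\<dots> \<le> (\<Sum>i\<in>(UNIV::'n set). real CARD('n) * (norm A * norm x))" by (rule sum_mono) (rule c)
  also have "\<dots> = real CARD('n) * real CARD('n) * norm A * norm x" by simp
  finally show ?thesis .
qed

lemma cs_scaleR: "complex_of_real E *s (v::complex^'n) = E *\<^sub>R v"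
proof (rule iffD2[OF vec_eq_iff], rule allI)
  fix i
  have "(E *\<^sub>R v) $ i = E *\<^sub>R (v $ i)" by simp
  also have "\<dots> = complex_of_real E * v $ i" by (rule scaleR_conv_of_real)
  finally show "(complex_of_real E *s v) $ i = (E *\<^sub>R v) $ i" by simp
qed

lemma sqint_scaleR:
  fixes f :: "real \<Rightarrow> complex^'n"
  assumes f: "square_integrable S f"
  shows "square_integrable S (\<lambda>x. c *\<^sub>R f x)"
proof -
  have m: "(\<lambda>x. c *\<^sub>R f x) measurable_on S"
    using f measurable_on_scaleR_const unfolding square_integrable_def by blast
  have "(\<lambda>x. c\<^sup>2 * (norm (f x))\<^sup>2) integrable_on S"
    using f unfolding square_integrable_def by (intro integrable_on_mult_right) auto
  moreover have "(\<lambda>x. (norm (c *\<^sub>R f x))\<^sup>2) = (\<lambda>x. c\<^sup>2 * (norm (f x))\<^sup>2)"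
    by (simp add: power_mult_distrib)
  ultimately show ?thesis using m unfolding square_integrable_def by simp
qed

lemma sqint_matmul:
  fixes V :: "real \<Rightarrow> complex^'n^'n" and u :: "real \<Rightarrow> complex^'n"
  assumes bdd: "bounded (range V)" and meas: "V measurable_on UNIV"
    and u: "square_integrable S u" and S: "S \<in> sets lebesgue"
  shows "square_integrable S (\<lambda>x. V x *v u x)"
proof -
  have "(\<lambda>x. if x \<in> S then V x else 0) measurable_on UNIV" by (rule measurable_on_restrict[OF meas S])
  then have Vm: "V measurable_on S" using measurable_on_UNIV by blast
  have um: "u measurable_on S" and ui: "(\<lambda>x. (norm (u x))\<^sup>2) integrable_on S"
    using u unfolding square_integrable_def by auto
  have m: "(\<lambda>x. V x *v u x) measurable_on S"
    by (rule measurable_on_combine[OF Vm um, where h="\<lambda>A x. A *v x"]) (use mv_cont in auto)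
  obtain B where B: "\<And>x. norm (V x) \<le> B" using bdd unfolding bounded_iff by auto
  define C where "C = real CARD('n) * real CARD('n) * B"
  have le: "norm ((norm (V x *v u x))\<^sup>2) \<le> C\<^sup>2 * (norm (u x))\<^sup>2" for x
  proof -
    have "norm (V x *v u x) \<le> real CARD('n) * real CARD('n) * norm (V x) * norm (u x)" by (rule norm_mv)
    also have "\<dots> \<le> C * norm (u x)" unfolding C_def
      by (intro mult_right_mono mult_left_mono B) auto
    finally have "norm (V x *v u x) \<le> C * norm (u x)" .
    then have "(norm (V x *v u x))\<^sup>2 \<le> (C * norm (u x))\<^sup>2" by (intro power_mono) auto
    then show ?thesis by (simp add: power_mult_distrib)
  qed
  have "(\<lambda>x. (norm (V x *v u x))\<^sup>2) integrable_on S"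
    by (rule measurable_bounded_by_integrable_imp_integrable[OF sq_meas[OF m S] integrable_on_mult_right[OF ui] le S])
  with m show ?thesis unfolding square_integrable_def by blast
qed

lemma sqint_restrict:
  fixes h :: "real \<Rightarrow> complex^'n"
  assumes h: "square_integrable UNIV h" and S: "S \<in> sets lebesgue"
  shows "square_integrable S h"
proof -
  have hm: "h measurable_on UNIV" and hi: "(\<lambda>x. (norm (h x))\<^sup>2) integrable_on UNIV"
    using h unfolding square_integrable_def by auto
  have "(\<lambda>x. if x \<in> S then h x else 0) measurable_on UNIV" by (rule measurable_on_restrict[OF hm S])
  then have m: "h measurable_on S" using measurable_on_UNIV by blast
  have "(\<lambda>x. (norm (h x))\<^sup>2) \<in> borel_measurable (lebesgue_on S)" by (rule sq_meas[OF m S])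
  moreover have U: "UNIV \<in> sets lebesgue" by simp
  ultimately have "(\<lambda>x. if x \<in> S then (norm (h x))\<^sup>2 else 0) \<in> borel_measurable (lebesgue_on UNIV)"
    using iffD2[OF borel_measurable_if_lebesgue_on[OF S U subset_UNIV]] by blast
  then have "(\<lambda>x. if x \<in> S then (norm (h x))\<^sup>2 else 0) integrable_on UNIV"
    by (rule measurable_bounded_by_integrable_imp_integrable[OF _ hi]) auto
  then have "(\<lambda>x. (norm (h x))\<^sup>2) integrable_on S" using integrable_restrict_UNIV by blast
  with m show ?thesis unfolding square_integrable_def by blast
qed

lemma H2_restrict:
  assumes H: "H2_repr UNIV \<psi> \<psi>1 \<psi>2" and S: "S \<in> sets lebesgue"
  shows "H2_repr S \<psi> \<psi>1 \<psi>2"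
  using H unfolding H2_repr_def
  by (auto intro: has_vector_derivative_within_subset sqint_restrict[OF _ S])

lemma H2_diff:
  assumes "H2_repr S \<psi> \<psi>1 \<psi>2" "H2_repr S \<phi> \<phi>1 \<phi>2" "S \<in> sets lebesgue"
  shows "H2_repr S (\<lambda>x. \<psi> x - \<phi> x) (\<lambda>x. \<psi>1 x - \<phi>1 x) (\<lambda>x. \<psi>2 x - \<phi>2 x)"
  using H2_add[OF assms(1) H2_neg[OF assms(2)] assms(3)] by simp


lemma lin_sub:
  fixes A :: "complex^'n^'n"
  shows "- w2 + A *v w - z *s w = - u2 + A *v u - z *s u \<Longrightarrow> w2 - u2 = A *v (w - u) - z *s (w - u)"
  by (simp add: matrix_vector_mult_diff_distrib vector_ssub_ldistrib algebra_simps)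

lemma exp_bound:
  assumes "0 \<le> (x::real)"
  shows "exp (-x) * (1 + x) \<le> 2 * exp (-x/2)"
proof -
  have "1 + x/2 \<le> exp (x/2)" by (rule exp_ge_add_one_self)
  then have "1 + x \<le> 2 * exp (x/2)" using assms by linarith
  then have "exp (-x) * (1 + x) \<le> exp (-x) * (2 * exp (x/2))" by (intro mult_left_mono) auto
  also have "\<dots> = 2 * (exp (-x) * exp (x/2))" by simp
  also have "exp (-x) * exp (x/2) = exp (-x/2)" by (simp flip: exp_add)
  finally show ?thesis .
qed

lemma sqint_exp:
  fixes p q :: "complex^'n"
  shows "square_integrable {0..} (\<lambda>x. exp (-x) *\<^sub>R (p + x *\<^sub>R q))"
proof -
  let ?f = "\<lambda>x. exp (-x) *\<^sub>R (p + x *\<^sub>R q)"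
  have S: "{0::real..} \<in> sets lebesgue" by simp
  have c: "continuous_on {0..} ?f" by (intro continuous_intros)
  have m: "?f measurable_on {0..}"
    using continuous_imp_measurable_on_sets_lebesgue[OF c S] measurable_on_iff_borel_measurable[OF S] by blast
  define K where "K = norm p + norm q"
  have K0: "0 \<le> K" by (simp add: K_def)
  have le: "norm ((norm (?f x))\<^sup>2) \<le> (4 * K\<^sup>2) * exp (- 1 * x)" if x: "x \<in> {0..}" for x
  proof -
    from x have x0: "0 \<le> x" by simp
    have "norm (?f x) = exp (-x) * norm (p + x *\<^sub>R q)" by simp
    also have "\<dots> \<le> exp (-x) * (norm p + x * norm q)"
      using x0 by (intro mult_left_mono) (auto intro: order_trans[OF norm_triangle_ineq])
    also have "\<dots> \<le> exp (-x) * (K * (1 + x))"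
      using x0 by (intro mult_left_mono) (auto simp: K_def algebra_simps)
    also have "\<dots> = K * (exp (-x) * (1 + x))" by simp
    also have "\<dots> \<le> K * (2 * exp (-x/2))" by (intro mult_left_mono exp_bound x0 K0)
    finally have n: "norm (?f x) \<le> 2 * K * exp (-x/2)" by simp
    then have "(norm (?f x))\<^sup>2 \<le> (2 * K * exp (-x/2))\<^sup>2" by (intro power_mono) auto
    also have "(2 * K * exp (-x/2))\<^sup>2 = 4 * K\<^sup>2 * (exp (-x/2) * exp (-x/2))"
      by (simp add: power2_eq_square)
    also have "exp (-x/2) * exp (-x/2) = exp (- 1 * x)" by (simp flip: exp_add)
    finally show ?thesis by simp
  qed
  have i: "(\<lambda>x. (4 * K\<^sup>2) * exp (- 1 * x)) integrable_on {0..}"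
    by (intro integrable_on_mult_right integrable_on_exp_minus_to_infinity) simp
  have "(\<lambda>x. (norm (?f x))\<^sup>2) integrable_on {0..}"
    by (rule measurable_bounded_by_integrable_imp_integrable[OF sq_meas[OF m S] i le S])
  with m show ?thesis unfolding square_integrable_def by blast
qed

lemma H2_exp:
  fixes c d :: "complex^'n"
  shows "H2_repr {0..} (\<lambda>x. exp (-x) *\<^sub>R (c + x *\<^sub>R d)) (\<lambda>x. exp (-x) *\<^sub>R ((d - c) + x *\<^sub>R (-d)))
           (\<lambda>x. exp (-x) *\<^sub>R ((c - d - d) + x *\<^sub>R d))"
  unfolding H2_repr_def
proof (intro conjI ballI impI)
  have d1: "((\<lambda>x. exp (-x) *\<^sub>R (c + x *\<^sub>R d)) has_vector_derivative exp (-x) *\<^sub>R ((d - c) + x *\<^sub>R (-d))) (at x)" for x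
    by (auto intro!: derivative_eq_intros simp: algebra_simps)
  have d2: "((\<lambda>x. exp (-x) *\<^sub>R ((d - c) + x *\<^sub>R (-d))) has_vector_derivative exp (-x) *\<^sub>R ((c - d - d) + x *\<^sub>R d)) (at x)" for x
    by (auto intro!: derivative_eq_intros simp: algebra_simps)
  fix x :: real
  show "((\<lambda>x. exp (-x) *\<^sub>R (c + x *\<^sub>R d)) has_vector_derivative exp (-x) *\<^sub>R ((d - c) + x *\<^sub>R (-d))) (at x within {0..})"
    using d1 by (rule has_vector_derivative_at_within)
next
  have d2: "((\<lambda>x. exp (-x) *\<^sub>R ((d - c) + x *\<^sub>R (-d))) has_vector_derivative exp (-x) *\<^sub>R ((c - d - d) + x *\<^sub>R d)) (at x)" for x
    by (auto intro!: derivative_eq_intros simp: algebra_simps)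
  fix a b :: real assume "a \<le> b"
  show "((\<lambda>x. exp (-x) *\<^sub>R ((c - d - d) + x *\<^sub>R d)) has_integral
         exp (-b) *\<^sub>R ((d - c) + b *\<^sub>R (-d)) - exp (-a) *\<^sub>R ((d - c) + a *\<^sub>R (-d))) {a..b}"
    by (rule fundamental_theorem_of_calculus[OF \<open>a \<le> b\<close>]) (use d2 has_vector_derivative_at_within in blast)
next
  show "square_integrable {0..} (\<lambda>x. exp (-x) *\<^sub>R (c + x *\<^sub>R d))"
       "square_integrable {0..} (\<lambda>x. exp (-x) *\<^sub>R ((d - c) + x *\<^sub>R (-d)))"
       "square_integrable {0..} (\<lambda>x. exp (-x) *\<^sub>R ((c - d - d) + x *\<^sub>R d))"
    by (rule sqint_exp)+
qed


lemma span_pm: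
  fixes V :: "real \<Rightarrow> complex^'n^'n" and E :: real
  assumes bdd: "bounded (range V)" and meas: "V measurable_on UNIV"
    and notspec: "complex_of_real E \<notin> schrodinger_spectrum V"
  shows "\<exists>a\<in>ell_plus V E. \<exists>b\<in>ell_minus V E. x = a + b"
proof -
  obtain xa xb where x: "x = (xa, xb)" by (cases x)
  define c where "c = xa"
  define d where "d = xa + xb"
  define u where "u = (\<lambda>x. exp (-x) *\<^sub>R (c + x *\<^sub>R d))"
  define u1 where "u1 = (\<lambda>x. exp (-x) *\<^sub>R ((d - c) + x *\<^sub>R (-d)))"
  define u2 where "u2 = (\<lambda>x. exp (-x) *\<^sub>R ((c - d - d) + x *\<^sub>R d))"
  have Hu: "H2_repr {0..} u u1 u2" unfolding u_def u1_def u2_def by (rule H2_exp)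
  have S0: "{0::real..} \<in> sets lebesgue" by simp
  have Sm: "{..0::real} \<in> sets lebesgue" by simp
  have su: "square_integrable {0..} u" and su2: "square_integrable {0..} u2"
    using Hu unfolding H2_repr_def by auto
  define z where "z = complex_of_real E"
  define g where "g = (\<lambda>x. - u2 x + V x *v u x - z *s u x)"
  have geq: "g = (\<lambda>x. (- u2 x + V x *v u x) - E *\<^sub>R u x)" by (simp add: g_def z_def cs_scaleR)
  have sg: "square_integrable {0..} g"
    unfolding geq
    by (rule sqint_diff[OF sqint_add[OF sqint_neg[OF su2] sqint_matmul[OF bdd meas su S0] S0] sqint_scaleR[OF su] S0])
  define f where "f = (\<lambda>x. if x \<in> {..0} then 0 else g x)"
  have s0: "square_integrable {..0} (\<lambda>x::real. 0::complex^'n)"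
    unfolding square_integrable_def by (simp add: integrable_0)
  have sf: "square_integrable UNIV f" unfolding f_def by (rule sqint_glue[OF s0 sg])
  obtain w w1 w2 where Hw: "H2_repr UNIV w w1 w2"
    and Nw: "negligible {x. - w2 x + V x *v w x - z *s w x \<noteq> f x}"
    using notspec_surj[OF notspec sf] unfolding z_def by blast
  have m: "(w 0, w1 0) \<in> ell_minus V E"
    unfolding ell_minus_def ell_mem
  proof (intro exI conjI)
    show "H2_repr {..0} w w1 w2" by (rule H2_restrict[OF Hw Sm])
    show "negligible {x\<in>{..0}. w2 x \<noteq> V x *v w x - complex_of_real E *s w x}"
    proof (rule negligible_subset[OF Nw], rule subsetI)
      fix x assume "x \<in> {x\<in>{..0}. w2 x \<noteq> V x *v w x - complex_of_real E *s w x}"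
      then have "x \<le> 0" "- w2 x + V x *v w x - z *s w x \<noteq> 0" using eqn_iff unfolding z_def by auto
      then show "x \<in> {x. - w2 x + V x *v w x - z *s w x \<noteq> f x}" by (simp add: f_def)
    qed
  qed simp
  have p: "(w 0 - u 0, w1 0 - u1 0) \<in> ell_plus V E"
    unfolding ell_plus_def ell_mem
  proof (intro exI conjI)
    show "H2_repr {0..} (\<lambda>x. w x - u x) (\<lambda>x. w1 x - u1 x) (\<lambda>x. w2 x - u2 x)"
      by (rule H2_diff[OF H2_restrict[OF Hw S0] Hu S0])
    show "negligible {x\<in>{0..}. w2 x - u2 x \<noteq> V x *v (w x - u x) - complex_of_real E *s (w x - u x)}"
    proof (rule negligible_subset[OF negligible_Un[OF Nw negligible_sing[of 0]]], rule subsetI)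
      fix x assume xx: "x \<in> {x\<in>{0..}. w2 x - u2 x \<noteq> V x *v (w x - u x) - complex_of_real E *s (w x - u x)}"
      show "x \<in> {x. - w2 x + V x *v w x - z *s w x \<noteq> f x} \<union> {0}"
      proof (cases "x = 0")
        case False
        with xx have "\<not> x \<le> 0" by auto
        then have fx: "f x = - u2 x + V x *v u x - z *s u x" by (simp add: f_def g_def)
        have "- w2 x + V x *v w x - z *s w x \<noteq> f x"
          using xx lin_sub[of "w2 x" "V x" "w x" z "u2 x" "u x"] unfolding fx z_def by auto
        then show ?thesis by simp
      qed simp
    qed
  qed simp
  have u0: "u 0 = xa" "u1 0 = xb" by (simp_all add: u_def u1_def c_def d_def)
  have "x = - (w 0 - u 0, w1 0 - u1 0) + (w 0, w1 0)" using x u0 by simp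
  moreover have "- (w 0 - u 0, w1 0 - u1 0) \<in> ell_plus V E"
    using ell_neg[OF p[unfolded ell_plus_def]] by (simp add: ell_plus_def)
  ultimately show ?thesis using m by blast
qed


theorem theorem2p19:
  fixes V :: "real \<Rightarrow> complex^'n^'n" and E :: real
  assumes herm: "\<forall>x. hermitian_mat (V x)"
    and bdd: "bounded (range V)"
    and meas: "V measurable_on UNIV"
    and notspec: "complex_of_real E \<notin> schrodinger_spectrum V"
  shows "lagrangian (ell_plus V E) \<and> lagrangian (ell_minus V E) \<and>
         ell_plus V E \<inter> ell_minus V E = {0} \<and>
         (\<forall>x. \<exists>a\<in>ell_plus V E. \<exists>b\<in>ell_minus V E. x = a + b)"
proof -
  have sp: "\<forall>x. \<exists>a\<in>ell_plus V E. \<exists>b\<in>ell_minus V E. x = a + b"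
    using span_pm[OF bdd meas notspec] by blast
  have ip: "omega p q = 0" if "p \<in> ell_plus V E" "q \<in> ell_plus V E" for p q
    using isotropic_half[OF herm, of "{0..}" p E q] that unfolding ell_plus_def by blast
  have im: "omega p q = 0" if "p \<in> ell_minus V E" "q \<in> ell_minus V E" for p q
    using isotropic_half[OF herm, of "{..0}" p E q] that unfolding ell_minus_def by blast
  have L1: "lagrangian (ell_plus V E)" by (rule lagr_abstract[OF ip im sp])
  have sp': "\<forall>x. \<exists>a\<in>ell_minus V E. \<exists>b\<in>ell_plus V E. x = a + b"
    using sp by (metis add.commute)
  have L2: "lagrangian (ell_minus V E)" by (rule lagr_abstract[OF im ip sp'])
  have I: "ell_plus V E \<inter> ell_minus V E = {0}"
  proof
    show "ell_plus V E \<inter> ell_minus V E \<subseteq> {0}"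
      using inter_zero[OF notspec] by blast
    have "(0::(complex^'n) \<times> (complex^'n)) \<in> ell_plus V E" unfolding ell_plus_def by (rule ell_zero) simp
    moreover have "(0::(complex^'n) \<times> (complex^'n)) \<in> ell_minus V E" unfolding ell_minus_def by (rule ell_zero) simp
    ultimately show "{0} \<subseteq> ell_plus V E \<inter> ell_minus V E" by blast
  qed
  show ?thesis using L1 L2 I sp by blast
qed

end
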